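(* Let $\mathbf{L}\in\mathbb{R}^{N_1\times N_2}$ satisfy Assumption 1 with $n$ clusters of sizes $n_1,\dots,n_n$, and suppose $\operatorname{rank}(\mathbf{L})=r$. Assume $r/n\ge 18\log\max_i n_i$ and $n_i\ge 96\,\frac{r}{n}\log n_i$ for all $1\le i\le n$. Then $$\mathbb{P}\left[\mu_v<\frac{1}{n}\cdot\frac{0.5\,N_2}{\min_i n_i}\right]\le 2\sum_{i=1}^n n_i^{-5},$$ where $\mu_v$ is the row-space incoherence parameter of $\mathbf{L}$.
   Context: Assumption 1: $\mathbf{L}=[\mathbf{U}_1\mathbf{Q}_1\ \cdots\ \mathbf{U}_n\mathbf{Q}_n]$, where for each $i$, $\mathbf{U}_i\in\mathbb{R}^{N_1\times r/n}$ has column space a uniformly random $r/n$-dimensional subspace of $\mathbb{R}^{N_1}$, and $\mathbf{Q}_i\in\mathbb{R}^{r/n\times n_i}$ has row space a uniformly random $r/n$-dimensional subspace of $\mathbb{R}^{n_i}$ (all drawn independently), with $\sum_{i=1}^n n_i=N_2$ and $\min_i n_i$ much larger than $r/n$. The compact SVD of $\mathbf{L}$ is $\mathbf{U}\boldsymbol{\Sigma}\mathbf{V}^T$ with $\mathbf{V}\in\mathbb{R}^{N_2\times r}$; $\mathbf{e}_i$ is the $i$-th standard basis vector of $\mathbb{R}^{N_2}$; the row-space incoherence parameter $\mu_v$ is the smallest constant such that $\max_{1\le i\le N_2}\|\mathbf{e}_i^T\mathbf{V}\|_2^2\le\mu_v r/N_2$. *)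

theory Defs
  imports "HOL-Probability.Probability"
begin

text \<open>Matrices are represented as functions on index pairs, (row, column),
  with the dimensions carried separately; a p x q matrix is extensional on
  the index set {..<p} x {..<q}.\<close>

type_synonym rmat = "nat \<times> nat \<Rightarrow> real"

definition matM :: "nat \<Rightarrow> nat \<Rightarrow> rmat measure" where
  "matM p q = PiM ({..<p} \<times> {..<q}) (\<lambda>_. borel)"

definition mmul :: "nat \<Rightarrow> nat \<Rightarrow> nat \<Rightarrow> rmat \<Rightarrow> rmat \<Rightarrow> rmat" where
  "mmul p k q A B = restrict (\<lambda>(i,j). \<Sum>l<k. A (i,l) * B (l,j)) ({..<p} \<times> {..<q})"

definition mtrans :: "nat \<Rightarrow> nat \<Rightarrow> rmat \<Rightarrow> rmat" where
  "mtrans p q A = restrict (\<lambda>(i,j). A (j,i)) ({..<q} \<times> {..<p})"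

definition mulv :: "nat \<Rightarrow> nat \<Rightarrow> rmat \<Rightarrow> (nat \<Rightarrow> real) \<Rightarrow> (nat \<Rightarrow> real)" where
  "mulv p q A c = (\<lambda>i. if i < p then (\<Sum>j<q. A (i,j) * c j) else 0)"

definition colspace :: "nat \<Rightarrow> nat \<Rightarrow> rmat \<Rightarrow> (nat \<Rightarrow> real) set" where
  "colspace p q A = {mulv p q A c | c. True}"

definition colrank :: "nat \<Rightarrow> nat \<Rightarrow> rmat \<Rightarrow> nat" where
  "colrank p q A = Max {card J | J. J \<subseteq> {..<q} \<and>
     (\<forall>c. (\<forall>i<p. (\<Sum>j\<in>J. c j * A (i,j)) = 0) \<longrightarrow> (\<forall>j\<in>J. c j = 0))}"

definition orthogonal_mat :: "nat \<Rightarrow> rmat \<Rightarrow> bool" where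
  "orthogonal_mat p Om \<longleftrightarrow> Om \<in> extensional ({..<p} \<times> {..<p}) \<and>
     (\<forall>i<p. \<forall>j<p. (\<Sum>k<p. Om (k,i) * Om (k,j)) = (if i = j then 1 else 0))"

definition colproj :: "nat \<Rightarrow> nat \<Rightarrow> rmat \<Rightarrow> rmat" where
  "colproj p q A = (THE P. P \<in> extensional ({..<p} \<times> {..<p}) \<and>
     (\<forall>i<p. \<forall>j<p. P (i,j) = P (j,i)) \<and>
     (\<forall>i<p. \<forall>j<p. (\<Sum>k<p. P (i,k) * P (k,j)) = P (i,j)) \<and>
     colspace p p P = colspace p q A)"

text \<open>The random p x d matrix X (on probability space M) has as column space a
  uniformly random d-dimensional subspace of R^p: X is a random matrix, its
  column space has dimension d almost surely, and the distribution of the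
  column space (encoded by its orthogonal projector) is invariant under all
  rotations of R^p (the uniform, i.e. Haar, distribution on the Grassmannian
  is the unique such distribution).\<close>
definition unif_colspace :: "'a measure \<Rightarrow> nat \<Rightarrow> nat \<Rightarrow> ('a \<Rightarrow> rmat) \<Rightarrow> bool" where
  "unif_colspace M p d X \<longleftrightarrow>
     X \<in> measurable M (matM p d) \<and>
     (AE \<omega> in M. colrank p d (X \<omega>) = d) \<and>
     (\<forall>Om. orthogonal_mat p Om \<longrightarrow>
        distr M (matM p p) (\<lambda>\<omega>. colproj p d (mmul p p d Om (X \<omega>)))
        = distr M (matM p p) (\<lambda>\<omega>. colproj p d (X \<omega>)))"

definition unif_rowspace :: "'a measure \<Rightarrow> nat \<Rightarrow> nat \<Rightarrow> ('a \<Rightarrow> rmat) \<Rightarrow> bool" where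
  "unif_rowspace M d q X \<longleftrightarrow>
     X \<in> measurable M (matM d q) \<and>
     unif_colspace M q d (\<lambda>\<omega>. mtrans d q (X \<omega>))"

definition offs :: "(nat \<Rightarrow> nat) \<Rightarrow> nat \<Rightarrow> nat" where
  "offs ns i = (\<Sum>k<i. ns k)"

text \<open>The block matrix L = [U_1 Q_1 ... U_n Q_n] (N1 x sum ns), where U_i is
  N1 x d and Q_i is d x ns i.\<close>
definition clusterL :: "nat \<Rightarrow> nat \<Rightarrow> nat \<Rightarrow> (nat \<Rightarrow> nat) \<Rightarrow> (nat \<Rightarrow> rmat) \<Rightarrow> (nat \<Rightarrow> rmat) \<Rightarrow> rmat" where
  "clusterL N1 n d ns U Q = restrict (\<lambda>(a,b).
      let i = (THE i. i < n \<and> offs ns i \<le> b \<and> b < offs ns i + ns i)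
      in (\<Sum>l<d. U i (a,l) * Q i (l, b - offs ns i)))
    ({..<N1} \<times> {..<(\<Sum>i<n. ns i)})"

definition compact_svd :: "nat \<Rightarrow> nat \<Rightarrow> nat \<Rightarrow> rmat \<Rightarrow> rmat \<Rightarrow> (nat \<Rightarrow> real) \<Rightarrow> rmat \<Rightarrow> bool" where
  "compact_svd N1 N2 r L U s V \<longleftrightarrow>
     U \<in> extensional ({..<N1} \<times> {..<r}) \<and> V \<in> extensional ({..<N2} \<times> {..<r}) \<and>
     (\<forall>j<r. \<forall>k<r. (\<Sum>a<N1. U (a,j) * U (a,k)) = (if j = k then 1 else 0)) \<and>
     (\<forall>j<r. \<forall>k<r. (\<Sum>b<N2. V (b,j) * V (b,k)) = (if j = k then 1 else 0)) \<and>
     (\<forall>j<r. s j > 0) \<and>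
     (\<forall>a<N1. \<forall>b<N2. L (a,b) = (\<Sum>j<r. U (a,j) * s j * V (b,j)))"

definition svdV :: "nat \<Rightarrow> nat \<Rightarrow> nat \<Rightarrow> rmat \<Rightarrow> rmat" where
  "svdV N1 N2 r L = (SOME V. \<exists>U s. compact_svd N1 N2 r L U s V)"

definition mu_v :: "nat \<Rightarrow> nat \<Rightarrow> nat \<Rightarrow> rmat \<Rightarrow> real" where
  "mu_v N1 N2 r L = Inf {\<mu>. \<forall>i<N2. (\<Sum>j<r. (svdV N1 N2 r L (i,j))^2) \<le> \<mu> * real r / real N2}"

end

theory Submission imports Defs begin

definition ip :: "nat \<Rightarrow> (nat\<Rightarrow>real) \<Rightarrow> (nat\<Rightarrow>real) \<Rightarrow> real" where
  "ip N x y = (\<Sum>i<N. x i * y i)"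
definition mv :: "nat \<Rightarrow> rmat \<Rightarrow> (nat\<Rightarrow>real) \<Rightarrow> (nat\<Rightarrow>real)" where
  "mv N R x = (\<lambda>a. \<Sum>b<N. R(a,b) * x b)"
definition mtv :: "nat \<Rightarrow> rmat \<Rightarrow> (nat\<Rightarrow>real) \<Rightarrow> (nat\<Rightarrow>real)" where
  "mtv N R y = (\<lambda>b. \<Sum>a<N. R(a,b) * y a)"
definition qf :: "nat \<Rightarrow> nat \<Rightarrow> rmat \<Rightarrow> (nat\<Rightarrow>real) \<Rightarrow> real" where
  "qf N1 N2 R x = ip N1 (mv N2 R x) (mv N2 R x)"

lemma ip_sq_le: "i < N \<Longrightarrow> (x i)^2 \<le> ip N x x"
  unfolding ip_def power2_eq_square
  by (rule member_le_sum[where f="\<lambda>i. x i * x i"]) auto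

lemma max_exists:
  assumes "N2 > 0"
  shows "\<exists>v. ip N2 v v = 1 \<and> (\<forall>x. ip N2 x x = 1 \<longrightarrow> qf N1 N2 R x \<le> qf N1 N2 R v)"
proof -
  let ?X = "product_topology (\<lambda>_. euclideanreal) {..<N2}"
  define C where "C = {x \<in> topspace ?X. ip N2 x x \<in> {1}}"
  define K where "K = (PiE {..<N2} (\<lambda>_. {-1..1::real}))"
  have cont_ip: "continuous_map ?X euclideanreal (\<lambda>x. ip N2 x x)"
    unfolding ip_def
    by (intro continuous_map_sum continuous_map_real_mult continuous_map_product_coordinates) auto
  have cont_q: "continuous_map ?X euclideanreal (qf N1 N2 R)"
    unfolding qf_def ip_def mv_def
    by (intro continuous_map_sum continuous_map_real_mult continuous_map_real_mult_left
        continuous_map_product_coordinates) auto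
  have clo: "closedin ?X C"
    unfolding C_def by (rule closedin_continuous_map_preimage[OF cont_ip]) auto
  have CK: "C \<subseteq> K"
  proof
    fix x assume "x \<in> C"
    then have x1: "ip N2 x x = 1" and xe: "x \<in> extensional {..<N2}" by (auto simp: C_def PiE_def)
    have "\<bar>x b\<bar> \<le> 1" if "b < N2" for b
    proof -
      have "(x b)^2 \<le> 1" using ip_sq_le[OF that, of x] x1 by simp
      then show ?thesis by (simp add: abs_square_le_1)
    qed
    then show "x \<in> K" using xe unfolding K_def by (auto simp: PiE_def Pi_def abs_le_iff)
  qed
  have "compactin ?X K" unfolding K_def by (subst compactin_PiE) auto
  then have "compactin ?X C" using closed_compactin CK clo by blast
  then have cpt: "compact (qf N1 N2 R ` C)"
    using image_compactin[OF _ cont_q] compactin_euclidean_iff by blast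
  define e0 where "e0 = restrict (\<lambda>b. if b = 0 then 1 else (0::real)) {..<N2}"
  have "ip N2 e0 e0 = (\<Sum>i<N2. if i = 0 then 1 else 0)"
    unfolding ip_def e0_def by (intro sum.cong) auto
  also have "\<dots> = 1" using assms by (simp add: sum.delta)
  finally have "e0 \<in> C" unfolding C_def e0_def by auto
  then have ne: "qf N1 N2 R ` C \<noteq> {}" by auto
  obtain s where s: "s \<in> qf N1 N2 R ` C" "\<forall>t\<in>qf N1 N2 R ` C. t \<le> s"
    using compact_attains_sup[OF cpt ne] by blast
  then obtain v where v: "v \<in> C" "s = qf N1 N2 R v" by auto
  have "qf N1 N2 R x \<le> qf N1 N2 R v" if "ip N2 x x = 1" for x
  proof -
    let ?x = "restrict x {..<N2}"
    have "ip N2 ?x ?x = ip N2 x x" unfolding ip_def by (intro sum.cong) auto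
    then have "?x \<in> C" using that unfolding C_def by auto
    moreover have "qf N1 N2 R ?x = qf N1 N2 R x"
    proof -
      have "mv N2 R ?x = mv N2 R x" unfolding mv_def by (intro ext sum.cong) auto
      then show ?thesis unfolding qf_def by simp
    qed
    ultimately show ?thesis using s v by force
  qed
  moreover have "ip N2 v v = 1" using v unfolding C_def by auto
  ultimately show ?thesis by blast
qed


lemma ip_comm: "ip N x y = ip N y x"
  unfolding ip_def by (simp add: mult.commute)

lemma ip_cong: "(\<And>i. i < N \<Longrightarrow> x i = x' i) \<Longrightarrow> (\<And>i. i < N \<Longrightarrow> y i = y' i) \<Longrightarrow> ip N x y = ip N x' y'"
  unfolding ip_def by (intro sum.cong) auto

lemma ip_expand: "ip N (\<lambda>i. a i + t * b i) (\<lambda>i. a i + t * b i)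
   = ip N a a + 2 * t * ip N a b + t^2 * ip N b b"
proof -
  have "ip N (\<lambda>i. a i + t * b i) (\<lambda>i. a i + t * b i)
     = (\<Sum>i<N. a i * a i + 2 * t * (a i * b i) + t^2 * (b i * b i))"
    unfolding ip_def by (intro sum.cong) (auto simp: algebra_simps power2_eq_square)
  also have "\<dots> = ip N a a + 2 * t * ip N a b + t^2 * ip N b b"
    unfolding ip_def by (simp add: sum.distrib sum_distrib_left)
  finally show ?thesis .
qed

lemma ip_scale: "ip N (\<lambda>i. c * a i) (\<lambda>i. d * b i) = c * d * ip N a b"
  unfolding ip_def by (simp add: sum_distrib_left algebra_simps)

lemma mv_lin: "mv N R (\<lambda>b. x b + t * w b) = (\<lambda>a. mv N R x a + t * mv N R w a)"
  unfolding mv_def by (auto simp: sum.distrib sum_distrib_left algebra_simps)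

lemma mv_scale: "mv N R (\<lambda>b. c * x b) = (\<lambda>a. c * mv N R x a)"
  unfolding mv_def by (auto simp: sum_distrib_left algebra_simps)

lemma adjoint: "ip N2 (mtv N1 R y) x = ip N1 y (mv N2 R x)"
  unfolding ip_def mtv_def mv_def sum_distrib_right sum_distrib_left
  by (subst sum.swap) (simp add: mult_ac)

lemma ip_self_nonneg: "ip N x x \<ge> 0"
  unfolding ip_def by (intro sum_nonneg) auto

lemma ip_self_zero: "ip N x x = 0 \<Longrightarrow> i < N \<Longrightarrow> x i = 0"
  unfolding ip_def by (subst (asm) sum_nonneg_eq_0_iff) auto

lemma qf_nonneg: "qf N1 N2 R x \<ge> 0"
  unfolding qf_def by (rule ip_self_nonneg)

lemma real_lin_quad: fixes P K :: real
  assumes "\<And>t. 2 * t * P \<le> t^2 * K" shows "P = 0"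
proof (rule ccontr)
  assume P: "P \<noteq> 0"
  define A where "A = \<bar>K\<bar> + 1"
  define t where "t = P / A"
  have pos: "A > 0" unfolding A_def by simp
  have tA: "t * A = P" unfolding t_def using pos by simp
  have "2 * t * P \<le> t^2 * K" by (rule assms)
  then have i1: "2 * t * P * A^2 \<le> t^2 * K * A^2" using pos by (simp add: mult_right_mono)
  have i2: "2 * t * P * A^2 = 2 * P * P * A"
  proof -
    have "2 * t * P * A^2 = 2 * P * A * (t * A)" by (simp only: power2_eq_square mult_ac)
    also have "\<dots> = 2 * P * A * P" by (simp only: tA)
    finally show ?thesis by (simp only: mult_ac)
  qed
  have i3: "t^2 * K * A^2 = P * P * K"
  proof -
    have "t^2 * K * A^2 = K * (t * A) * (t * A)" by (simp only: power2_eq_square mult_ac)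
    also have "\<dots> = K * P * P" by (simp only: tA)
    finally show ?thesis by (simp only: mult_ac)
  qed
  have "2 * P * P * A \<le> P * P * K" using i1 unfolding i2 i3 .
  moreover have "P * P * (2 * A - K) = 2 * P * P * A - P * P * K" by (simp add: algebra_simps)
  ultimately have "P * P * (2 * A - K) \<le> 0" by linarith
  moreover have "P * P > 0" using P not_real_square_gt_zero by blast
  moreover have "2 * A - K > 0" unfolding A_def by (simp add: abs_if)
  ultimately show False by (meson mult_pos_pos not_le)
qed

lemma homog:
  assumes vmax: "\<forall>x. ip N2 x x = 1 \<longrightarrow> qf N1 N2 R x \<le> qf N1 N2 R v"
  shows "qf N1 N2 R x \<le> qf N1 N2 R v * ip N2 x x"
proof (cases "ip N2 x x = 0")
  case True
  then have "mv N2 R x = (\<lambda>a. 0)" unfolding mv_def using ip_self_zero[OF True]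
    by (auto intro!: sum.neutral)
  then have "qf N1 N2 R x = 0" unfolding qf_def ip_def by simp
  then show ?thesis using True by simp
next
  case False
  then have pos: "ip N2 x x > 0" using ip_self_nonneg[of N2 x] by simp
  define c where "c = 1 / sqrt (ip N2 x x)"
  have c2: "c * c * ip N2 x x = 1" unfolding c_def using pos
    by (simp add: field_simps)
  have "ip N2 (\<lambda>i. c * x i) (\<lambda>i. c * x i) = 1" using c2 by (simp add: ip_scale)
  then have "qf N1 N2 R (\<lambda>i. c * x i) \<le> qf N1 N2 R v" using vmax by blast
  moreover have "qf N1 N2 R (\<lambda>i. c * x i) = c * c * qf N1 N2 R x"
    unfolding qf_def mv_scale ip_scale by simp
  ultimately have "c * c * qf N1 N2 R x \<le> qf N1 N2 R v" by simp
  then have "ip N2 x x * (c * c * qf N1 N2 R x) \<le> ip N2 x x * qf N1 N2 R v"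
    using pos by (simp add: mult_left_mono)
  moreover have "ip N2 x x * (c * c * qf N1 N2 R x) = (c * c * ip N2 x x) * qf N1 N2 R x"
    by (simp add: algebra_simps)
  ultimately show ?thesis using c2 by (simp add: mult.commute)
qed

lemma variational:
  assumes vmax: "\<forall>x. ip N2 x x = 1 \<longrightarrow> qf N1 N2 R x \<le> qf N1 N2 R v"
    and v1: "ip N2 v v = 1" and wv: "ip N2 w v = 0"
  shows "ip N1 (mv N2 R w) (mv N2 R v) = 0"
proof -
  let ?P = "ip N1 (mv N2 R w) (mv N2 R v)"
  let ?K = "qf N1 N2 R v * ip N2 w w - qf N1 N2 R w"
  have "2 * t * ?P \<le> t^2 * ?K" for t
  proof -
    let ?x = "\<lambda>b. v b + t * w b"
    have h: "qf N1 N2 R ?x \<le> qf N1 N2 R v * ip N2 ?x ?x" by (rule homog[OF vmax])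
    have e1: "ip N2 ?x ?x = 1 + t^2 * ip N2 w w"
      using ip_expand[of N2 v t w] v1 wv ip_comm[of N2 v w] by simp
    have e2: "qf N1 N2 R ?x = qf N1 N2 R v + 2 * t * ?P + t^2 * qf N1 N2 R w"
    proof -
      have "qf N1 N2 R ?x = ip N1 (mv N2 R v) (mv N2 R v) + 2 * t * ip N1 (mv N2 R v) (mv N2 R w)
          + t^2 * ip N1 (mv N2 R w) (mv N2 R w)"
        unfolding qf_def mv_lin by (rule ip_expand)
      moreover have "ip N1 (mv N2 R v) (mv N2 R w) = ?P" by (rule ip_comm)
      ultimately show ?thesis unfolding qf_def by simp
    qed
    have a1: "t^2 * ?K = t^2 * (qf N1 N2 R v * ip N2 w w) - t^2 * qf N1 N2 R w"
      by (simp add: right_diff_distrib)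
    have a2: "qf N1 N2 R v * (1 + t^2 * ip N2 w w) = qf N1 N2 R v + t^2 * (qf N1 N2 R v * ip N2 w w)"
      by (simp add: algebra_simps)
    have h': "qf N1 N2 R ?x \<le> qf N1 N2 R v * (1 + t^2 * ip N2 w w)" using h e1 by simp
    have "qf N1 N2 R v + 2 * t * ?P + t^2 * qf N1 N2 R w \<le> qf N1 N2 R v + t^2 * (qf N1 N2 R v * ip N2 w w)"
      using h' unfolding e2 a2 .
    then show ?thesis unfolding a1 by linarith
  qed
  then show ?thesis by (rule real_lin_quad)
qed


definition orth :: "nat \<Rightarrow> (nat \<Rightarrow> nat \<Rightarrow> real) \<Rightarrow> nat set \<Rightarrow> bool" where
  "orth N E S \<longleftrightarrow> (\<forall>s\<in>S. \<forall>t\<in>S. ip N (E s) (E t) = (if s = t then 1 else 0))"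
definition inspan :: "nat \<Rightarrow> (nat \<Rightarrow> nat \<Rightarrow> real) \<Rightarrow> nat set \<Rightarrow> (nat \<Rightarrow> real) \<Rightarrow> bool" where
  "inspan N X T x \<longleftrightarrow> (\<exists>c. \<forall>i<N. x i = (\<Sum>t\<in>T. c t * X t i))"
definition indep :: "nat \<Rightarrow> (nat \<Rightarrow> nat \<Rightarrow> real) \<Rightarrow> nat set \<Rightarrow> bool" where
  "indep N X T \<longleftrightarrow> (\<forall>c. (\<forall>i<N. (\<Sum>t\<in>T. c t * X t i) = 0) \<longrightarrow> (\<forall>t\<in>T. c t = 0))"

lemma ip_lincomb_left:
  assumes "\<And>i. i < N \<Longrightarrow> x i = (\<Sum>t\<in>T. c t * X t i)"
  shows "ip N x y = (\<Sum>t\<in>T. c t * ip N (X t) y)"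
proof -
  have "ip N x y = (\<Sum>i<N. (\<Sum>t\<in>T. c t * X t i) * y i)"
    unfolding ip_def using assms by (intro sum.cong) auto
  also have "\<dots> = (\<Sum>t\<in>T. c t * ip N (X t) y)"
    unfolding ip_def sum_distrib_right sum_distrib_left
    by (subst sum.swap) (simp add: mult_ac)
  finally show ?thesis .
qed

lemma orth_sum_delta:
  assumes "orth N E S" "finite S" "t \<in> S"
  shows "(\<Sum>s\<in>S. c s * ip N (E s) (E t)) = c t"
proof -
  have "(\<Sum>s\<in>S. c s * ip N (E s) (E t)) = (\<Sum>s\<in>S. if s = t then c t else 0)"
    using assms unfolding orth_def by (intro sum.cong) auto
  also have "\<dots> = c t" using assms by simp
  finally show ?thesis .
qed

lemma parseval:
  assumes o: "orth N E S" and f: "finite S"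
    and x: "\<And>i. i < N \<Longrightarrow> x i = (\<Sum>s\<in>S. c s * E s i)"
  shows "\<And>t. t \<in> S \<Longrightarrow> ip N x (E t) = c t" and "ip N x x = (\<Sum>s\<in>S. (c s)^2)"
proof -
  fix t assume t: "t \<in> S"
  have "ip N x (E t) = (\<Sum>s\<in>S. c s * ip N (E s) (E t))" by (rule ip_lincomb_left[OF x])
  then show "ip N x (E t) = c t" using orth_sum_delta[OF o f t] by simp
next
  have "ip N x x = (\<Sum>s\<in>S. c s * ip N (E s) x)" by (rule ip_lincomb_left[OF x])
  also have "\<dots> = (\<Sum>s\<in>S. c s * c s)"
  proof (intro sum.cong refl)
    fix s assume s: "s \<in> S"
    have "ip N (E s) x = ip N x (E s)" by (rule ip_comm)
    also have "\<dots> = (\<Sum>s'\<in>S. c s' * ip N (E s') (E s))" by (rule ip_lincomb_left[OF x])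
    also have "\<dots> = c s" using orth_sum_delta[OF o f s] by simp
    finally show "c s * ip N (E s) x = c s * c s" by simp
  qed
  finally show "ip N x x = (\<Sum>s\<in>S. (c s)^2)" by (simp add: power2_eq_square)
qed

lemma bessel:
  assumes o: "orth N E S" and f: "finite S"
  shows "(\<Sum>s\<in>S. (ip N x (E s))^2) \<le> ip N x x"
proof -
  define a where "a s = ip N x (E s)" for s
  define y where "y i = (\<Sum>s\<in>S. a s * E s i)" for i
  have py: "ip N y y = (\<Sum>s\<in>S. (a s)^2)"
    by (rule parseval(2)[OF o f]) (simp add: y_def)
  have pxy: "ip N x y = (\<Sum>s\<in>S. (a s)^2)"
  proof -
    have "ip N y x = (\<Sum>s\<in>S. a s * ip N (E s) x)" by (rule ip_lincomb_left) (simp add: y_def)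
    also have "\<dots> = (\<Sum>s\<in>S. (a s)^2)" unfolding a_def
      by (intro sum.cong refl) (simp add: ip_comm power2_eq_square)
    finally show ?thesis by (simp add: ip_comm)
  qed
  have "0 \<le> ip N (\<lambda>i. x i + (-1) * y i) (\<lambda>i. x i + (-1) * y i)" by (rule ip_self_nonneg)
  also have "\<dots> = ip N x x + 2 * (-1) * ip N x y + (-1)^2 * ip N y y" by (rule ip_expand)
  finally show ?thesis using py pxy unfolding a_def by simp
qed

lemma count_orth:
  assumes oE: "orth N E S" and oF: "orth N F T" and fS: "finite S" and fT: "finite T"
    and sp: "\<forall>s\<in>S. inspan N F T (E s)"
  shows "card S \<le> card T"
proof -
  have "real (card S) = (\<Sum>s\<in>S. ip N (E s) (E s))"
    using oE unfolding orth_def by simp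
  also have "\<dots> = (\<Sum>s\<in>S. \<Sum>t\<in>T. (ip N (F t) (E s))^2)"
  proof (intro sum.cong refl)
    fix s assume s: "s \<in> S"
    obtain c where c: "\<forall>i<N. E s i = (\<Sum>t\<in>T. c t * F t i)" using sp s unfolding inspan_def by blast
    have "ip N (E s) (E s) = (\<Sum>t\<in>T. (c t)^2)" by (rule parseval(2)[OF oF fT]) (use c in auto)
    also have "\<dots> = (\<Sum>t\<in>T. (ip N (F t) (E s))^2)"
    proof (intro sum.cong refl)
      fix t assume t: "t \<in> T"
      have "ip N (E s) (F t) = c t" by (rule parseval(1)[OF oF fT _ t]) (use c in auto)
      then show "(c t)^2 = (ip N (F t) (E s))^2" by (simp add: ip_comm)
    qed
    finally show "ip N (E s) (E s) = (\<Sum>t\<in>T. (ip N (F t) (E s))^2)" .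
  qed
  also have "\<dots> = (\<Sum>t\<in>T. \<Sum>s\<in>S. (ip N (F t) (E s))^2)" by (rule sum.swap)
  also have "\<dots> \<le> (\<Sum>t\<in>T. ip N (F t) (F t))"
    by (intro sum_mono bessel[OF oE fS])
  also have "\<dots> = real (card T)" using oF unfolding orth_def by simp
  finally show ?thesis by simp
qed

lemma inspan_member: assumes "finite T" "t \<in> T" shows "inspan N X T (X t)"
proof -
  have "X t i = (\<Sum>s\<in>T. (if s = t then 1 else 0) * X s i)" for i
  proof -
    have "(\<Sum>s\<in>T. (if s = t then 1 else 0) * X s i) = (\<Sum>s\<in>T. if s = t then X s i else 0)"
      by (intro sum.cong) auto
    then show ?thesis using assms by simp
  qed
  then show ?thesis unfolding inspan_def
    by (intro exI[where x="\<lambda>s. if s = t then 1 else 0"] allI impI) simp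
qed

lemma inspan_mono: "inspan N X T x \<Longrightarrow> T \<subseteq> T' \<Longrightarrow> finite T' \<Longrightarrow> inspan N X T' x"
proof -
  assume "inspan N X T x" "T \<subseteq> T'" "finite T'"
  then obtain c where c: "\<forall>i<N. x i = (\<Sum>t\<in>T. c t * X t i)" unfolding inspan_def by blast
  let ?c = "\<lambda>t. if t \<in> T then c t else 0"
  have "x i = (\<Sum>t\<in>T'. ?c t * X t i)" if "i < N" for i
  proof -
    have "x i = (\<Sum>t\<in>T. c t * X t i)" using c that by blast
    also have "\<dots> = (\<Sum>t\<in>T. ?c t * X t i)" by (intro sum.cong) auto
    also have "\<dots> = (\<Sum>t\<in>T'. ?c t * X t i)"
      using \<open>T \<subseteq> T'\<close> \<open>finite T'\<close> by (intro sum.mono_neutral_left) auto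
    finally show ?thesis .
  qed
  then show ?thesis unfolding inspan_def by (intro exI[of _ ?c]) blast
qed

lemma inspan_cong: "inspan N X T x \<Longrightarrow> (\<And>t. t \<in> T \<Longrightarrow> X t = Y t) \<Longrightarrow> (\<And>i. i < N \<Longrightarrow> x i = y i) \<Longrightarrow> inspan N Y T y"
proof -
  assume a: "inspan N X T x" "\<And>t. t \<in> T \<Longrightarrow> X t = Y t" "\<And>i. i < N \<Longrightarrow> x i = y i"
  then obtain c where c: "\<forall>i<N. x i = (\<Sum>t\<in>T. c t * X t i)" unfolding inspan_def by blast
  have "y i = (\<Sum>t\<in>T. c t * Y t i)" if "i < N" for i
  proof -
    have "y i = x i" using a(3) that by simp
    also have "\<dots> = (\<Sum>t\<in>T. c t * X t i)" using c that by blast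
    also have "\<dots> = (\<Sum>t\<in>T. c t * Y t i)" using a(2) by (intro sum.cong) auto
    finally show ?thesis .
  qed
  then show ?thesis unfolding inspan_def by (intro exI[of _ c]) blast
qed

lemma inspan_trans:
  assumes sp: "\<forall>s\<in>S. inspan N X T (E s)"
    and x: "\<And>i. i < N \<Longrightarrow> x i = (\<Sum>s\<in>S. c s * E s i)"
  shows "inspan N X T x"
proof -
  obtain b where b: "\<forall>s\<in>S. \<forall>i<N. E s i = (\<Sum>t\<in>T. b s t * X t i)"
    using bchoice[OF sp[unfolded inspan_def]] by blast
  have "x i = (\<Sum>t\<in>T. (\<Sum>s\<in>S. c s * b s t) * X t i)" if i: "i < N" for i
  proof -
    have "x i = (\<Sum>s\<in>S. c s * (\<Sum>t\<in>T. b s t * X t i))" using x[OF i] b i by (auto intro: sum.cong)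
    also have "\<dots> = (\<Sum>t\<in>T. (\<Sum>s\<in>S. c s * b s t) * X t i)"
      unfolding sum_distrib_left sum_distrib_right by (subst sum.swap) (simp add: mult_ac)
    finally show ?thesis .
  qed
  then show ?thesis unfolding inspan_def by (intro exI[of _ "\<lambda>t. \<Sum>s\<in>S. c s * b s t"]) blast
qed

lemma inspan_trans2:
  assumes sp: "\<forall>s\<in>S. inspan N X T (E s)" and x: "inspan N E S x"
  shows "inspan N X T x"
  using x inspan_trans[OF sp] unfolding inspan_def by blast

lemma inspan_lin2:
  assumes "inspan N X T x" "inspan N X T y"
  shows "inspan N X T (\<lambda>i. \<alpha> * x i + \<beta> * y i)"
proof -
  obtain c d where c: "\<forall>i<N. x i = (\<Sum>t\<in>T. c t * X t i)" and d: "\<forall>i<N. y i = (\<Sum>t\<in>T. d t * X t i)"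
    using assms unfolding inspan_def by blast
  have "\<alpha> * x i + \<beta> * y i = (\<Sum>t\<in>T. (\<alpha> * c t + \<beta> * d t) * X t i)" if "i < N" for i
    using c d that by (simp add: sum.distrib sum_distrib_left algebra_simps)
  then show ?thesis unfolding inspan_def by (intro exI[of _ "\<lambda>t. \<alpha> * c t + \<beta> * d t"]) blast
qed


lemma indep_subset:
  assumes "indep N X T'" "T \<subseteq> T'" "finite T'"
  shows "indep N X T"
  unfolding indep_def
proof (intro allI impI)
  fix c assume h: "\<forall>i<N. (\<Sum>t\<in>T. c t * X t i) = 0"
  let ?c = "\<lambda>t. if t \<in> T then c t else 0"
  have "\<forall>i<N. (\<Sum>t\<in>T'. ?c t * X t i) = 0"
  proof (intro allI impI)
    fix i assume i: "i < N"
    have "(\<Sum>t\<in>T'. ?c t * X t i) = (\<Sum>t\<in>T. ?c t * X t i)"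
      using assms(2,3) by (intro sum.mono_neutral_right) auto
    also have "\<dots> = (\<Sum>t\<in>T. c t * X t i)" by (intro sum.cong) auto
    finally show "(\<Sum>t\<in>T'. ?c t * X t i) = 0" using h i by simp
  qed
  then have "\<forall>t\<in>T'. ?c t = 0" using assms(1)[unfolded indep_def, rule_format, of ?c] by blast
  then show "\<forall>t\<in>T. c t = 0" using assms(2) by force
qed

lemma gram_schmidt:
  assumes "finite T"
  shows "\<exists>E S. S \<subseteq> T \<and> orth N E S \<and> (\<forall>t\<in>T. inspan N E S (X t)) \<and>
     (\<forall>s\<in>S. inspan N X T (E s)) \<and> (indep N X T \<longrightarrow> S = T)"
  using assms
proof (induction T rule: finite_induct)
  case empty
  show ?case
    by (rule exI[of _ "\<lambda>_ _. 0"], rule exI[of _ "{}"]) (auto simp: orth_def indep_def)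
next
  case (insert x T)
  obtain E S where S: "S \<subseteq> T" and oS: "orth N E S" and spT: "\<forall>t\<in>T. inspan N E S (X t)"
    and spS: "\<forall>s\<in>S. inspan N X T (E s)" and ind: "indep N X T \<longrightarrow> S = T"
    using insert.IH by blast
  have fS: "finite S" using S insert.hyps(1) finite_subset by blast
  have xS: "x \<notin> S" using S insert.hyps(2) by blast
  have fT': "finite (insert x T)" using insert.hyps(1) by simp
  define a where "a s = ip N (X x) (E s)" for s
  define \<rho> where "\<rho> i = X x i + (-1) * (\<Sum>s\<in>S. a s * E s i)" for i
  have spS': "\<forall>s\<in>S. inspan N X (insert x T) (E s)"
    using spS inspan_mono[OF _ _ fT'] by blast
  have XxT': "inspan N X (insert x T) (X x)" by (rule inspan_member[OF fT']) simp
  have \<rho>sp: "inspan N X (insert x T) \<rho>"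
  proof -
    have "inspan N X (insert x T) (\<lambda>i. \<Sum>s\<in>S. a s * E s i)"
      by (rule inspan_trans[OF spS']) simp
    from inspan_lin2[OF XxT' this, of 1 "-1"] show ?thesis unfolding \<rho>_def by simp
  qed
  have \<rho>orth: "ip N \<rho> (E s) = 0" if s: "s \<in> S" for s
  proof -
    have "ip N \<rho> (E s) = ip N (X x) (E s) + (-1) * ip N (\<lambda>i. \<Sum>s\<in>S. a s * E s i) (E s)"
    proof -
      have "ip N \<rho> (E s) = (\<Sum>i<N. X x i * E s i - ((\<Sum>s\<in>S. a s * E s i) * E s i))"
        unfolding ip_def \<rho>_def by (intro sum.cong) (auto simp: algebra_simps)
      then show ?thesis unfolding ip_def by (simp add: sum_subtractf)
    qed
    also have "ip N (\<lambda>i. \<Sum>s\<in>S. a s * E s i) (E s) = (\<Sum>s'\<in>S. a s' * ip N (E s') (E s))"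
      by (rule ip_lincomb_left) simp
    also have "\<dots> = a s" by (rule orth_sum_delta[OF oS fS s])
    finally show ?thesis unfolding a_def by simp
  qed
  show ?case
  proof (cases "ip N \<rho> \<rho> = 0")
    case True
    have z: "\<rho> i = 0" if "i < N" for i using ip_self_zero[OF True that] .
    have XxS: "inspan N E S (X x)"
    proof -
      have "X x i = (\<Sum>s\<in>S. a s * E s i)" if "i < N" for i using z[OF that] unfolding \<rho>_def by simp
      then show ?thesis unfolding inspan_def by (intro exI[of _ a]) blast
    qed
    have notind: "\<not> indep N X (insert x T)"
    proof
      assume indT': "indep N X (insert x T)"
      have "inspan N X T (X x)" by (rule inspan_trans2[OF spS XxS])
      then obtain d where d: "\<forall>i<N. X x i = (\<Sum>t\<in>T. d t * X t i)" unfolding inspan_def by blast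
      let ?c = "d(x := -1)"
      have "\<forall>i<N. (\<Sum>t\<in>insert x T. ?c t * X t i) = 0"
      proof (intro allI impI)
        fix i assume i: "i < N"
        have "(\<Sum>t\<in>insert x T. ?c t * X t i) = - X x i + (\<Sum>t\<in>T. ?c t * X t i)"
          using insert.hyps by simp
        also have "(\<Sum>t\<in>T. ?c t * X t i) = (\<Sum>t\<in>T. d t * X t i)"
          using insert.hyps(2) by (intro sum.cong) auto
        finally show "(\<Sum>t\<in>insert x T. ?c t * X t i) = 0" using d i by simp
      qed
      then have "?c x = 0" using indT'[unfolded indep_def, rule_format, of ?c] by blast
      then show False by simp
    qed
    have "S \<subseteq> insert x T" using S by blast
    moreover have "\<forall>t\<in>insert x T. inspan N E S (X t)" using spT XxS by blast
    ultimately show ?thesis using oS spS' notind by blast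
  next
    case False
    then have pos: "ip N \<rho> \<rho> > 0" using ip_self_nonneg[of N \<rho>] by simp
    define nr where "nr = sqrt (ip N \<rho> \<rho>)"
    have nr: "nr > 0" "nr * nr = ip N \<rho> \<rho>" unfolding nr_def using pos by auto
    define E' where "E' = E(x := (\<lambda>i. (1 / nr) * \<rho> i))"
    have E'S: "E' s = E s" if "s \<in> S" for s using that xS unfolding E'_def by auto
    have E'x: "E' x = (\<lambda>i. (1 / nr) * \<rho> i)" unfolding E'_def by simp
    have fS': "finite (insert x S)" using fS by simp
    have oS': "orth N E' (insert x S)"
      unfolding orth_def
    proof (intro ballI)
      fix s t assume s: "s \<in> insert x S" and t: "t \<in> insert x S"
      have xx: "ip N (E' x) (E' x) = 1"
        unfolding E'x ip_scale using nr pos by simp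
      have xo: "ip N (E' x) (E' u) = 0" if u: "u \<in> S" for u
      proof -
        have "ip N (E' x) (E' u) = ip N (\<lambda>i. (1 / nr) * \<rho> i) (\<lambda>i. 1 * E u i)"
          unfolding E'x E'S[OF u] by simp
        also have "\<dots> = (1/nr) * 1 * ip N \<rho> (E u)" by (rule ip_scale)
        finally show ?thesis using \<rho>orth[OF u] by simp
      qed
      show "ip N (E' s) (E' t) = (if s = t then 1 else 0)"
      proof (cases "s = x")
        case True
        then show ?thesis using xx xo t xS by auto
      next
        case sx: False
        then have sS: "s \<in> S" using s by simp
        show ?thesis
        proof (cases "t = x")
          case True
          then show ?thesis using xo[OF sS] ip_comm[of N "E' s" "E' x"] sx by simp
        next
          case False
          then have "t \<in> S" using t by simp
          then show ?thesis using oS sS E'S unfolding orth_def by simp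
        qed
      qed
    qed
    have spT': "\<forall>t\<in>insert x T. inspan N E' (insert x S) (X t)"
    proof
      fix t assume t: "t \<in> insert x T"
      show "inspan N E' (insert x S) (X t)"
      proof (cases "t = x")
        case True
        let ?c = "a(x := nr)"
        have "X x i = (\<Sum>s\<in>insert x S. ?c s * E' s i)" if "i < N" for i
        proof -
          have "(\<Sum>s\<in>insert x S. ?c s * E' s i) = nr * E' x i + (\<Sum>s\<in>S. ?c s * E' s i)"
            using fS xS by simp
          also have "(\<Sum>s\<in>S. ?c s * E' s i) = (\<Sum>s\<in>S. a s * E s i)"
            using xS E'S by (intro sum.cong) auto
          also have "nr * E' x i = \<rho> i" unfolding E'x using nr by simp
          finally show ?thesis unfolding \<rho>_def by simp
        qed
        then show ?thesis unfolding True inspan_def by (intro exI[of _ ?c]) blast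
      next
        case False
        then have "inspan N E S (X t)" using spT t by simp
        then have "inspan N E' S (X t)" by (rule inspan_cong) (auto simp: E'S)
        then show ?thesis by (rule inspan_mono) (use fS in auto)
      qed
    qed
    have spS'': "\<forall>s\<in>insert x S. inspan N X (insert x T) (E' s)"
    proof
      fix s assume s: "s \<in> insert x S"
      show "inspan N X (insert x T) (E' s)"
      proof (cases "s = x")
        case True
        have "inspan N X (insert x T) (\<lambda>i. (1/nr) * \<rho> i + 0 * \<rho> i)"
          by (rule inspan_lin2[OF \<rho>sp \<rho>sp])
        then show ?thesis unfolding True E'x by simp
      next
        case False
        then have "s \<in> S" using s by simp
        then show ?thesis using spS' E'S by simp
      qed
    qed
    have indc: "indep N X (insert x T) \<longrightarrow> insert x S = insert x T"
    proof
      assume "indep N X (insert x T)"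
      then have "indep N X T" using indep_subset[of N X "insert x T" T] insert.hyps(1) by blast
      then show "insert x S = insert x T" using ind by simp
    qed
    have "insert x S \<subseteq> insert x T" using S by blast
    then show ?thesis using oS' spT' spS'' indc by blast
  qed
qed


definition dec :: "nat \<Rightarrow> nat \<Rightarrow> rmat \<Rightarrow> nat \<Rightarrow> (nat \<Rightarrow> nat \<Rightarrow> real) \<Rightarrow> (nat \<Rightarrow> nat \<Rightarrow> real) \<Rightarrow> (nat \<Rightarrow> real) \<Rightarrow> bool" where
  "dec N1 N2 L k u v \<sigma> \<longleftrightarrow> orth N1 u {..<k} \<and> orth N2 v {..<k} \<and> (\<forall>t<k. \<sigma> t > 0) \<and>
     (\<forall>t<k. \<forall>a<N1. mv N2 L (v t) a = \<sigma> t * u t a) \<and>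
     (\<forall>t<k. \<forall>b<N2. mtv N1 L (u t) b = \<sigma> t * v t b)"

definition resid :: "rmat \<Rightarrow> nat \<Rightarrow> (nat \<Rightarrow> nat \<Rightarrow> real) \<Rightarrow> (nat \<Rightarrow> nat \<Rightarrow> real) \<Rightarrow> (nat \<Rightarrow> real) \<Rightarrow> rmat" where
  "resid L k u v \<sigma> = (\<lambda>(a,b). L(a,b) - (\<Sum>t<k. \<sigma> t * u t a * v t b))"

lemma mv_resid: "mv N2 (resid L k u v \<sigma>) x a = mv N2 L x a - (\<Sum>s<k. \<sigma> s * u s a * ip N2 (v s) x)"
proof -
  have "mv N2 (resid L k u v \<sigma>) x a = (\<Sum>b<N2. L(a,b) * x b - (\<Sum>s<k. \<sigma> s * u s a * v s b * x b))"
    unfolding mv_def resid_def by (intro sum.cong) (auto simp: sum_distrib_right left_diff_distrib)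
  also have "\<dots> = mv N2 L x a - (\<Sum>b<N2. \<Sum>s<k. \<sigma> s * u s a * v s b * x b)"
    unfolding mv_def by (simp add: sum_subtractf)
  also have "(\<Sum>b<N2. \<Sum>s<k. \<sigma> s * u s a * v s b * x b) = (\<Sum>s<k. \<sigma> s * u s a * ip N2 (v s) x)"
    unfolding ip_def sum_distrib_left by (subst sum.swap) (simp add: mult_ac)
  finally show ?thesis .
qed

lemma mtv_resid: "mtv N1 (resid L k u v \<sigma>) y b = mtv N1 L y b - (\<Sum>s<k. \<sigma> s * v s b * ip N1 (u s) y)"
proof -
  have "mtv N1 (resid L k u v \<sigma>) y b = (\<Sum>a<N1. L(a,b) * y a - (\<Sum>s<k. \<sigma> s * u s a * v s b * y a))"
    unfolding mtv_def resid_def by (intro sum.cong) (auto simp: sum_distrib_right left_diff_distrib)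
  also have "\<dots> = mtv N1 L y b - (\<Sum>a<N1. \<Sum>s<k. \<sigma> s * u s a * v s b * y a)"
    unfolding mtv_def by (simp add: sum_subtractf)
  also have "(\<Sum>a<N1. \<Sum>s<k. \<sigma> s * u s a * v s b * y a) = (\<Sum>s<k. \<sigma> s * v s b * ip N1 (u s) y)"
    unfolding ip_def sum_distrib_left by (subst sum.swap) (simp add: mult_ac)
  finally show ?thesis .
qed

lemma sum_orth_delta_lt:
  assumes "orth N v {..<k}" "t < k"
  shows "(\<Sum>s<k. c s * ip N (v s) (v t)) = c t"
  using orth_sum_delta[OF assms(1) _ , of t c] assms(2) by simp

lemma resid_kill:
  assumes d: "dec N1 N2 L k u v \<sigma>" and t: "t < k"
  shows "\<And>a. a < N1 \<Longrightarrow> mv N2 (resid L k u v \<sigma>) (v t) a = 0"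
    and "\<And>b. b < N2 \<Longrightarrow> mtv N1 (resid L k u v \<sigma>) (u t) b = 0"
proof -
  fix a assume a: "a < N1"
  have o: "orth N2 v {..<k}" using d unfolding dec_def by blast
  have "(\<Sum>s<k. \<sigma> s * u s a * ip N2 (v s) (v t)) = \<sigma> t * u t a"
    using sum_orth_delta_lt[OF o t, of "\<lambda>s. \<sigma> s * u s a"] by simp
  then show "mv N2 (resid L k u v \<sigma>) (v t) a = 0"
    unfolding mv_resid using d t a unfolding dec_def by simp
next
  fix b assume b: "b < N2"
  have o: "orth N1 u {..<k}" using d unfolding dec_def by blast
  have "(\<Sum>s<k. \<sigma> s * v s b * ip N1 (u s) (u t)) = \<sigma> t * v t b"
    using sum_orth_delta_lt[OF o t, of "\<lambda>s. \<sigma> s * v s b"] by simp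
  then show "mtv N1 (resid L k u v \<sigma>) (u t) b = 0"
    unfolding mtv_resid using d t b unfolding dec_def by simp
qed

lemma ip_unit_vec: "b < N \<Longrightarrow> ip N (\<lambda>i. if i = b then 1 else 0) x = x b"
proof -
  assume b: "b < N"
  have "ip N (\<lambda>i. if i = b then 1 else 0) x = (\<Sum>i<N. if i = b then x b else 0)"
    unfolding ip_def by (intro sum.cong) auto
  then show ?thesis using b by simp
qed

lemma mv_unit_vec: "b < N2 \<Longrightarrow> mv N2 R (\<lambda>i. if i = b then 1 else 0) a = R(a,b)"
proof -
  assume b: "b < N2"
  have "mv N2 R (\<lambda>i. if i = b then 1 else 0) a = (\<Sum>i<N2. if i = b then R(a,b) else 0)"
    unfolding mv_def by (intro sum.cong) auto
  then show ?thesis using b by simp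
qed

lemma top_pair:
  assumes a0: "a0 < N1" and b0: "b0 < N2" and nz: "R(a0,b0) \<noteq> 0"
  shows "\<exists>w u \<sigma>. \<sigma> > 0 \<and> ip N2 w w = 1 \<and> ip N1 u u = 1 \<and>
      (\<forall>a. mv N2 R w a = \<sigma> * u a) \<and> (\<forall>b<N2. mtv N1 R u b = \<sigma> * w b)"
proof -
  have "N2 > 0" using b0 by simp
  then obtain w where w1: "ip N2 w w = 1" and wmax: "\<forall>x. ip N2 x x = 1 \<longrightarrow> qf N1 N2 R x \<le> qf N1 N2 R w"
    using max_exists by blast
  define e where "e = (\<lambda>i::nat. if i = b0 then 1 else (0::real))"
  have "ip N2 e e = 1" unfolding e_def using ip_unit_vec[OF b0] by simp
  then have "qf N1 N2 R e \<le> qf N1 N2 R w" using wmax by blast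
  moreover have "qf N1 N2 R e \<ge> (R(a0,b0))^2"
  proof -
    have "mv N2 R e = (\<lambda>a. R(a,b0))" unfolding e_def using mv_unit_vec[OF b0] by auto
    then show ?thesis unfolding qf_def using ip_sq_le[OF a0, of "\<lambda>a. R(a,b0)"] by simp
  qed
  moreover have "(R(a0,b0))^2 > 0" using nz by simp
  ultimately have qpos: "qf N1 N2 R w > 0" by linarith
  define \<sigma> where "\<sigma> = sqrt (qf N1 N2 R w)"
  have \<sigma>: "\<sigma> > 0" "\<sigma> * \<sigma> = qf N1 N2 R w" unfolding \<sigma>_def using qpos by auto
  define u where "u = (\<lambda>a. (1/\<sigma>) * mv N2 R w a)"
  have mvw: "mv N2 R w a = \<sigma> * u a" for a unfolding u_def using \<sigma> by simp
  have u1: "ip N1 u u = 1"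
  proof -
    have "ip N1 u u = (1/\<sigma>) * (1/\<sigma>) * qf N1 N2 R w" unfolding u_def qf_def by (rule ip_scale)
    then show ?thesis using \<sigma> qpos by simp
  qed
  have mtvu: "mtv N1 R u b = \<sigma> * w b" if b: "b < N2" for b
  proof -
    define x where "x = (\<lambda>i::nat. if i = b then 1 else (0::real))"
    let ?y = "\<lambda>i. x i + (- w b) * w i"
    have "ip N2 ?y w = ip N2 x w + (- w b) * ip N2 w w"
    proof -
      have "ip N2 ?y w = (\<Sum>i<N2. x i * w i + (- w b) * (w i * w i))"
        unfolding ip_def by (intro sum.cong) (auto simp: algebra_simps)
      then show ?thesis unfolding ip_def by (simp add: sum_subtractf sum_distrib_left sum_negf)
    qed
    also have "ip N2 x w = w b" unfolding x_def using ip_unit_vec[OF b] by simp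
    finally have "ip N2 ?y w = 0" using w1 by simp
    then have "ip N1 (mv N2 R ?y) (mv N2 R w) = 0" by (rule variational[OF wmax w1])
    moreover have "mv N2 R ?y = (\<lambda>a. R(a,b) + (- w b) * mv N2 R w a)"
      unfolding mv_lin x_def using mv_unit_vec[OF b] by simp
    ultimately have "ip N1 (\<lambda>a. R(a,b) + (- w b) * mv N2 R w a) (mv N2 R w) = 0" by simp
    moreover have "ip N1 (\<lambda>a. R(a,b) + (- w b) * mv N2 R w a) (mv N2 R w)
        = ip N1 (\<lambda>a. R(a,b)) (mv N2 R w) + (- w b) * qf N1 N2 R w"
    proof -
      have "ip N1 (\<lambda>a. R(a,b) + (- w b) * mv N2 R w a) (mv N2 R w)
          = (\<Sum>i<N1. R(i,b) * mv N2 R w i + (- w b) * (mv N2 R w i * mv N2 R w i))"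
        unfolding ip_def by (intro sum.cong) (auto simp: algebra_simps)
      then show ?thesis unfolding ip_def qf_def by (simp add: sum_subtractf sum_distrib_left sum_negf)
    qed
    ultimately have h: "ip N1 (\<lambda>a. R(a,b)) (mv N2 R w) = w b * qf N1 N2 R w" by simp
    have "mtv N1 R u b = (1/\<sigma>) * ip N1 (\<lambda>a. R(a,b)) (mv N2 R w)"
      unfolding mtv_def u_def ip_def by (simp add: sum_distrib_left mult_ac)
    also have "\<dots> = (1/\<sigma>) * (w b * (\<sigma> * \<sigma>))" using h \<sigma> by simp
    also have "\<dots> = \<sigma> * w b" using \<sigma>(1) by (simp add: field_simps)
    finally show ?thesis .
  qed
  show ?thesis using \<sigma>(1) w1 u1 mvw mtvu by blast
qed


lemma ip_scale_left: "ip N (\<lambda>i. c * a i) y = c * ip N a y"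
  unfolding ip_def by (simp add: sum_distrib_left mult_ac)

lemma orth_extend:
  assumes o: "orth N E {..<k}" and e1: "ip N e e = 1" and eo: "\<forall>t<k. ip N e (E t) = 0"
  shows "orth N (E(k := e)) {..<Suc k}"
  unfolding orth_def
proof (intro ballI)
  fix s t assume s: "s \<in> {..<Suc k}" and t: "t \<in> {..<Suc k}"
  show "ip N ((E(k := e)) s) ((E(k := e)) t) = (if s = t then 1 else 0)"
  proof (cases "s = k")
    case True
    then show ?thesis using e1 eo t by auto
  next
    case sk: False
    then have sk': "s < k" using s by simp
    show ?thesis
    proof (cases "t = k")
      case True
      then show ?thesis using eo sk' sk ip_comm[of N "E s" e] by auto
    next
      case False
      then have "t < k" using t by simp
      then show ?thesis using o sk sk' False unfolding orth_def by auto
    qed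
  qed
qed

lemma extend:
  assumes d: "dec N1 N2 L k u v \<sigma>" and a0: "a0 < N1" and b0: "b0 < N2"
    and nz: "resid L k u v \<sigma> (a0,b0) \<noteq> 0"
  shows "\<exists>u' v' \<sigma>'. dec N1 N2 L (Suc k) u' v' \<sigma>'"
proof -
  let ?R = "resid L k u v \<sigma>"
  obtain w uu s where s: "s > 0" and w1: "ip N2 w w = 1" and u1: "ip N1 uu uu = 1"
    and mvw: "\<forall>a. mv N2 ?R w a = s * uu a" and mtvu: "\<forall>b<N2. mtv N1 ?R uu b = s * w b"
    using top_pair[where R="?R", OF a0 b0 nz] by blast
  have wo: "ip N2 w (v t) = 0" if t: "t < k" for t
  proof -
    have "ip N2 w (v t) = ip N2 (\<lambda>b. (1/s) * mtv N1 ?R uu b) (v t)"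
      using mtvu s by (intro ip_cong) auto
    also have "\<dots> = (1/s) * ip N2 (mtv N1 ?R uu) (v t)" by (rule ip_scale_left)
    also have "ip N2 (mtv N1 ?R uu) (v t) = ip N1 uu (mv N2 ?R (v t))" by (rule adjoint)
    also have "ip N1 uu (mv N2 ?R (v t)) = ip N1 uu (\<lambda>a. 0)"
      using resid_kill(1)[OF d t] by (intro ip_cong) auto
    finally show ?thesis by (simp add: ip_def)
  qed
  have uo: "ip N1 uu (u t) = 0" if t: "t < k" for t
  proof -
    have "ip N1 uu (u t) = ip N1 (\<lambda>a. (1/s) * mv N2 ?R w a) (u t)"
      using mvw s by (intro ip_cong) auto
    also have "\<dots> = (1/s) * ip N1 (mv N2 ?R w) (u t)" by (rule ip_scale_left)
    also have "ip N1 (mv N2 ?R w) (u t) = ip N1 (u t) (mv N2 ?R w)" by (rule ip_comm)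
    also have "ip N1 (u t) (mv N2 ?R w) = ip N2 (mtv N1 ?R (u t)) w" by (simp add: adjoint)
    also have "\<dots> = ip N2 (\<lambda>a. 0) w"
      using resid_kill(2)[OF d t] by (intro ip_cong) auto
    finally show ?thesis by (simp add: ip_def)
  qed
  have mvL: "mv N2 L w a = s * uu a" for a
  proof -
    have "(\<Sum>t<k. \<sigma> t * u t a * ip N2 (v t) w) = 0"
      using wo by (intro sum.neutral) (auto simp: ip_comm)
    then show ?thesis using mv_resid[of N2 L k u v \<sigma> w a] mvw by simp
  qed
  have mtvL: "mtv N1 L uu b = s * w b" if b: "b < N2" for b
  proof -
    have "(\<Sum>t<k. \<sigma> t * v t b * ip N1 (u t) uu) = 0"
      using uo by (intro sum.neutral) (auto simp: ip_comm)
    then show ?thesis using mtv_resid[of N1 L k u v \<sigma> uu b] mtvu b by simp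
  qed
  have "dec N1 N2 L (Suc k) (u(k := uu)) (v(k := w)) (\<sigma>(k := s))"
    unfolding dec_def
  proof (intro conjI allI impI)
    show "orth N1 (u(k := uu)) {..<Suc k}"
      by (rule orth_extend) (use d u1 uo in \<open>auto simp: dec_def\<close>)
    show "orth N2 (v(k := w)) {..<Suc k}"
      by (rule orth_extend) (use d w1 wo in \<open>auto simp: dec_def\<close>)
  next
    fix t assume "t < Suc k"
    then show "(\<sigma>(k := s)) t > 0" using d s unfolding dec_def by (cases "t = k") auto
  next
    fix t a assume t: "t < Suc k" and a: "a < N1"
    show "mv N2 L ((v(k := w)) t) a = (\<sigma>(k := s)) t * (u(k := uu)) t a"
      using d t a mvL unfolding dec_def by (cases "t = k") auto
  next
    fix t b assume t: "t < Suc k" and b: "b < N2"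
    show "mtv N1 L ((u(k := uu)) t) b = (\<sigma>(k := s)) t * (v(k := w)) t b"
      using d t b mtvL unfolding dec_def by (cases "t = k") auto
  qed
  then show ?thesis by blast
qed

lemma dec_bound:
  assumes d: "dec N1 N2 L k u v \<sigma>" shows "k \<le> N2"
proof -
  define F where "F b = (\<lambda>i::nat. if i = b then 1 else (0::real))" for b :: nat
  have oF: "orth N2 F {..<N2}"
    unfolding orth_def F_def using ip_unit_vec by auto
  have "inspan N2 F {..<N2} (v t)" for t
  proof -
    have "v t i = (\<Sum>b<N2. v t b * F b i)" if "i < N2" for i
    proof -
      have "(\<Sum>b<N2. v t b * F b i) = (\<Sum>b<N2. if b = i then v t i else 0)"
        unfolding F_def by (intro sum.cong) auto
      then show ?thesis using that by simp
    qed
    then show ?thesis unfolding inspan_def by (intro exI[of _ "v t"]) blast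
  qed
  then have "card {..<k} \<le> card {..<N2}"
    using count_orth[OF _ oF] d unfolding dec_def by blast
  then show ?thesis by simp
qed

lemma full_dec:
  "\<exists>k u v \<sigma>. dec N1 N2 L k u v \<sigma> \<and> (\<forall>a<N1. \<forall>b<N2. L(a,b) = (\<Sum>t<k. \<sigma> t * u t a * v t b))"
proof -
  have main: "\<forall>k u v \<sigma>. dec N1 N2 L k u v \<sigma> \<and> N2 - k \<le> m \<longrightarrow>
      (\<exists>k u v \<sigma>. dec N1 N2 L k u v \<sigma> \<and> (\<forall>a<N1. \<forall>b<N2. L(a,b) = (\<Sum>t<k. \<sigma> t * u t a * v t b)))" for m
  proof (induction m)
    case 0
    show ?case
    proof (intro allI impI)
      fix k u v \<sigma> assume h: "dec N1 N2 L k u v \<sigma> \<and> N2 - k \<le> 0"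
      show "\<exists>k u v \<sigma>. dec N1 N2 L k u v \<sigma> \<and> (\<forall>a<N1. \<forall>b<N2. L(a,b) = (\<Sum>t<k. \<sigma> t * u t a * v t b))"
      proof (cases "\<forall>a<N1. \<forall>b<N2. resid L k u v \<sigma> (a,b) = 0")
        case True
        then show ?thesis using h unfolding resid_def by fastforce
      next
        case False
        then obtain a b where "a < N1" "b < N2" "resid L k u v \<sigma> (a,b) \<noteq> 0" by blast
        then obtain u' v' \<sigma>' where "dec N1 N2 L (Suc k) u' v' \<sigma>'" using extend h by blast
        then have "Suc k \<le> N2" by (rule dec_bound)
        then show ?thesis using h by simp
      qed
    qed
  next
    case (Suc m)
    show ?case
    proof (intro allI impI)
      fix k u v \<sigma> assume h: "dec N1 N2 L k u v \<sigma> \<and> N2 - k \<le> Suc m"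
      show "\<exists>k u v \<sigma>. dec N1 N2 L k u v \<sigma> \<and> (\<forall>a<N1. \<forall>b<N2. L(a,b) = (\<Sum>t<k. \<sigma> t * u t a * v t b))"
      proof (cases "\<forall>a<N1. \<forall>b<N2. resid L k u v \<sigma> (a,b) = 0")
        case True
        then show ?thesis using h unfolding resid_def by fastforce
      next
        case False
        then obtain a b where "a < N1" "b < N2" "resid L k u v \<sigma> (a,b) \<noteq> 0" by blast
        then obtain u' v' \<sigma>' where d': "dec N1 N2 L (Suc k) u' v' \<sigma>'" using extend h by blast
        have "N2 - k \<le> Suc m" using h by blast
        then have "N2 - Suc k \<le> m" by arith
        then show ?thesis using Suc.IH d' by blast
      qed
    qed
  qed
  have "dec N1 N2 L 0 (\<lambda>_ _. 0) (\<lambda>_ _. 0) (\<lambda>_. 1)" unfolding dec_def orth_def by simp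
  then show ?thesis using main[of N2, rule_format, of 0 "\<lambda>_ _. 0" "\<lambda>_ _. 0" "\<lambda>_. 1"] by simp
qed


lemma colrank_dec:
  assumes d: "dec N1 N2 L k u v \<sigma>"
    and eq: "\<forall>a<N1. \<forall>b<N2. L(a,b) = (\<Sum>t<k. \<sigma> t * u t a * v t b)"
  shows "colrank N1 N2 L = k"
proof -
  define col where "col = (\<lambda>j i. L(i,j))"
  define A where "A = {card J | J. J \<subseteq> {..<N2} \<and> indep N1 col J}"
  have Aeq: "colrank N1 N2 L = Max A" unfolding colrank_def A_def indep_def col_def by simp
  have ou: "orth N1 u {..<k}" using d unfolding dec_def by blast
  have finA: "finite A"
  proof -
    have "A \<subseteq> card ` Pow {..<N2}" unfolding A_def by auto
    then show ?thesis using finite_subset by blast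
  qed
  have "0 \<in> A" unfolding A_def indep_def by (intro CollectI exI[of _ "{}"]) simp
  then have neA: "A \<noteq> {}" by blast
  have colu: "inspan N1 u {..<k} (col j)" if "j < N2" for j
  proof -
    have "col j i = (\<Sum>t<k. (\<sigma> t * v t j) * u t i)" if "i < N1" for i
      unfolding col_def using eq \<open>j < N2\<close> that by (simp add: mult_ac)
    then show ?thesis unfolding inspan_def by (intro exI[of _ "\<lambda>t. \<sigma> t * v t j"]) blast
  qed
  have upper: "x \<le> k" if "x \<in> A" for x
  proof -
    obtain J where J: "x = card J" "J \<subseteq> {..<N2}" "indep N1 col J" using \<open>x \<in> A\<close> unfolding A_def by blast
    have fJ: "finite J" using J(2) finite_subset by blast
    obtain E S where S: "S \<subseteq> J" "orth N1 E S" "\<forall>s\<in>S. inspan N1 col J (E s)" "indep N1 col J \<longrightarrow> S = J"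
      using gram_schmidt[OF fJ, of N1 col] by blast
    have SJ: "S = J" using S(4) J(3) by blast
    have "\<forall>j\<in>J. inspan N1 u {..<k} (col j)" using colu J(2) by blast
    then have "\<forall>s\<in>S. inspan N1 u {..<k} (E s)" using S(3) inspan_trans2 by blast
    then have "card S \<le> card {..<k}" using count_orth[OF S(2) ou] fJ SJ by simp
    then show ?thesis using J(1) SJ by simp
  qed
  have memA: "x \<in> A \<longleftrightarrow> (\<exists>J. x = card J \<and> J \<subseteq> {..<N2} \<and> indep N1 col J)" for x
    unfolding A_def by blast
  obtain J where J: "card J = Max A" "J \<subseteq> {..<N2}" "indep N1 col J"
    using Max_in[OF finA neA] unfolding memA by metis
  have fJ: "finite J" using J(2) finite_subset by blast
  have colJ: "inspan N1 col J (col b)" if b: "b < N2" for b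
  proof (cases "b \<in> J")
    case True
    then show ?thesis by (rule inspan_member[OF fJ])
  next
    case False
    have "\<not> indep N1 col (insert b J)"
    proof
      assume "indep N1 col (insert b J)"
      then have "card (insert b J) \<in> A" unfolding A_def using J(2) b by blast
      then have "card (insert b J) \<le> Max A" using Max_ge[OF finA] by blast
      then show False using J(1) False fJ by simp
    qed
    then obtain c where c0: "\<forall>i<N1. (\<Sum>t\<in>insert b J. c t * col t i) = 0" and cnz: "\<exists>t\<in>insert b J. c t \<noteq> 0"
      unfolding indep_def by blast
    have sumi: "c b * col b i + (\<Sum>t\<in>J. c t * col t i) = 0" if "i < N1" for i
      using c0 that False fJ by simp
    have cb: "c b \<noteq> 0"
    proof
      assume cb0: "c b = 0"
      then have "\<forall>i<N1. (\<Sum>t\<in>J. c t * col t i) = 0" using sumi by simp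
      then have "\<forall>t\<in>J. c t = 0" using J(3)[unfolded indep_def, rule_format, of c] by blast
      then show False using cnz cb0 by blast
    qed
    have "col b i = (\<Sum>t\<in>J. (- c t / c b) * col t i)" if "i < N1" for i
    proof -
      have e1: "(\<Sum>t\<in>J. (- c t / c b) * col t i) = (- 1 / c b) * (\<Sum>t\<in>J. c t * col t i)"
        by (simp add: sum_distrib_left)
      have e2: "(\<Sum>t\<in>J. c t * col t i) = - (c b * col b i)" using sumi[OF that] by linarith
      have "(- 1 / c b) * (- (c b * col b i)) = col b i" using cb by simp
      then show ?thesis using e1 e2 by simp
    qed
    then show ?thesis unfolding inspan_def by (intro exI[of _ "\<lambda>t. - c t / c b"]) blast
  qed
  have uJ: "inspan N1 col J (u t)" if t: "t < k" for t
  proof -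
    have "u t i = (\<Sum>b\<in>{..<N2}. ((1 / \<sigma> t) * v t b) * col b i)" if i: "i < N1" for i
    proof -
      have "mv N2 L (v t) i = \<sigma> t * u t i" using d t i unfolding dec_def by blast
      moreover have "\<sigma> t > 0" using d t unfolding dec_def by blast
      ultimately have "u t i = (1 / \<sigma> t) * mv N2 L (v t) i" by simp
      then show ?thesis unfolding mv_def col_def by (simp add: sum_distrib_left mult_ac)
    qed
    then have "inspan N1 col {..<N2} (u t)" unfolding inspan_def
      by (intro exI[of _ "\<lambda>b. (1 / \<sigma> t) * v t b"]) blast
    moreover have "\<forall>b\<in>{..<N2}. inspan N1 col J (col b)" using colJ by blast
    ultimately show ?thesis using inspan_trans2 by blast
  qed
  obtain E S where S: "S \<subseteq> J" "orth N1 E S" "\<forall>j\<in>J. inspan N1 E S (col j)"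
    using gram_schmidt[OF fJ, of N1 col] by blast
  have fS: "finite S" using S(1) fJ finite_subset by blast
  have "\<forall>t\<in>{..<k}. inspan N1 E S (u t)" using uJ S(3) inspan_trans2 by blast
  then have "card {..<k} \<le> card S" using count_orth[OF ou S(2)] fS by simp
  moreover have "card S \<le> card J" using S(1) fJ card_mono by blast
  ultimately have "k \<le> Max A" using J(1) by simp
  moreover have "Max A \<le> k" using upper Max_in[OF finA neA] by blast
  ultimately show ?thesis using Aeq by simp
qed

lemma svd_exists:
  assumes "colrank N1 N2 L = r"
  shows "\<exists>U s V. compact_svd N1 N2 r L U s V"
proof -
  obtain k u v \<sigma> where d: "dec N1 N2 L k u v \<sigma>"
    and eq: "\<forall>a<N1. \<forall>b<N2. L(a,b) = (\<Sum>t<k. \<sigma> t * u t a * v t b)"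
    using full_dec by blast
  have kr: "k = r" using colrank_dec[OF d eq] assms by simp
  define U where "U = restrict (\<lambda>(a,t). u t a) ({..<N1} \<times> {..<k})"
  define V where "V = restrict (\<lambda>(b,t). v t b) ({..<N2} \<times> {..<k})"
  have "compact_svd N1 N2 k L U \<sigma> V"
    unfolding compact_svd_def
  proof (intro conjI allI impI)
    show "U \<in> extensional ({..<N1} \<times> {..<k})" unfolding U_def by simp
    show "V \<in> extensional ({..<N2} \<times> {..<k})" unfolding V_def by simp
  next
    fix j l assume j: "j < k" and l: "l < k"
    have "(\<Sum>a<N1. U (a, j) * U (a, l)) = ip N1 (u j) (u l)"
      unfolding U_def ip_def using j l by (intro sum.cong) auto
    then show "(\<Sum>a<N1. U (a, j) * U (a, l)) = (if j = l then 1 else 0)"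
      using d j l unfolding dec_def orth_def by simp
  next
    fix j l assume j: "j < k" and l: "l < k"
    have "(\<Sum>b<N2. V (b, j) * V (b, l)) = ip N2 (v j) (v l)"
      unfolding V_def ip_def using j l by (intro sum.cong) auto
    then show "(\<Sum>b<N2. V (b, j) * V (b, l)) = (if j = l then 1 else 0)"
      using d j l unfolding dec_def orth_def by simp
  next
    fix j assume "j < k" then show "\<sigma> j > 0" using d unfolding dec_def by blast
  next
    fix a b assume a: "a < N1" and b: "b < N2"
    have "(\<Sum>j<k. U (a, j) * \<sigma> j * V (b, j)) = (\<Sum>j<k. \<sigma> j * u j a * v j b)"
      unfolding U_def V_def using a b by (intro sum.cong) auto
    then show "L (a, b) = (\<Sum>j<k. U (a, j) * \<sigma> j * V (b, j))" using eq a b by simp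
  qed
  then show ?thesis using kr by blast
qed


lemma sum_split_add:
  fixes f :: "nat \<Rightarrow> 'a::comm_monoid_add" and a m :: nat
  shows "(\<Sum>b<a + m. f b) = (\<Sum>b<a. f b) + (\<Sum>c<m. f (a + c))"
  by (induction m) (simp_all add: add.assoc)

lemma block_sum:
  fixes f :: "nat \<Rightarrow> real"
  assumes am: "a + m \<le> N" and z: "\<And>b. b < N \<Longrightarrow> \<not> (a \<le> b \<and> b < a + m) \<Longrightarrow> f b = 0"
  shows "(\<Sum>b<N. f b) = (\<Sum>c<m. f (a + c))"
proof -
  have "(\<Sum>b<N. f b) = (\<Sum>b\<in>{a..<a+m}. f b)"
    using am z by (intro sum.mono_neutral_right) auto
  also have "\<dots> = (\<Sum>c<m. f (a + c))"
  proof -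
    show ?thesis using sum.shift_bounds_nat_ivl[of f 0 a m] by (simp add: atLeast0LessThan add.commute)
  qed
  finally show ?thesis .
qed

lemma svd_V_formula:
  assumes svd: "compact_svd N1 N2 r L Uu s V" and b: "b < N2" and k: "k < r"
  shows "V(b,k) = (1 / s k) * (\<Sum>a<N1. Uu(a,k) * L(a,b))"
proof -
  have orthU: "\<forall>j<r. \<forall>l<r. (\<Sum>a<N1. Uu (a,j) * Uu (a,l)) = (if j = l then 1 else 0)"
    and spos: "\<forall>j<r. s j > 0"
    and Leq: "\<forall>a<N1. \<forall>b<N2. L (a,b) = (\<Sum>j<r. Uu (a,j) * s j * V (b,j))"
    using svd unfolding compact_svd_def by blast+
  have "(\<Sum>a<N1. Uu(a,k) * L(a,b)) = (\<Sum>a<N1. \<Sum>j<r. Uu(a,k) * Uu (a,j) * (s j * V (b,j)))"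
    using Leq b by (intro sum.cong) (auto simp: sum_distrib_left mult_ac)
  also have "\<dots> = (\<Sum>j<r. (\<Sum>a<N1. Uu(a,k) * Uu (a,j)) * (s j * V (b,j)))"
    by (subst sum.swap) (simp add: sum_distrib_right)
  also have "\<dots> = (\<Sum>j<r. if j = k then s k * V (b,k) else 0)"
    using orthU k by (intro sum.cong) auto
  also have "\<dots> = s k * V(b,k)" using k by simp
  finally have "(\<Sum>a<N1. Uu(a,k) * L(a,b)) = s k * V(b,k)" .
  moreover have "s k > 0" using spos k by blast
  ultimately show ?thesis by (simp add: field_simps)
qed

lemma block_V_bound:
  assumes svd: "compact_svd N1 N2 r L Uu s V" and am: "a0 + m \<le> N2"
    and Lblk: "\<forall>a<N1. \<forall>c<m. L(a, a0 + c) = (\<Sum>l<d. UU (a,l) * QQ (l,c))"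
  shows "(\<Sum>c<m. \<Sum>j<r. (V(a0 + c, j))^2) \<le> real d"
proof -
  define v where "v j = (\<lambda>b. V(b,j))" for j
  define w where "w j = (\<lambda>c. V(a0 + c, j))" for j
  define q where "q l = (\<lambda>c. QQ (l,c))" for l
  have ov: "orth N2 v {..<r}" using svd unfolding compact_svd_def orth_def ip_def v_def by auto
  have wsp: "inspan m q {..<d} (w j)" if j: "j < r" for j
  proof -
    have "w j c = (\<Sum>l<d. ((1 / s j) * (\<Sum>a<N1. Uu(a,j) * UU (a,l))) * q l c)" if c: "c < m" for c
    proof -
      have "w j c = (1 / s j) * (\<Sum>a<N1. Uu(a,j) * L(a, a0 + c))"
        unfolding w_def using svd_V_formula[OF svd _ j] c am by simp
      also have "(\<Sum>a<N1. Uu(a,j) * L(a, a0 + c)) = (\<Sum>a<N1. \<Sum>l<d. Uu(a,j) * UU (a,l) * QQ (l,c))"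
        using Lblk c by (intro sum.cong) (auto simp: sum_distrib_left mult_ac)
      also have "\<dots> = (\<Sum>l<d. (\<Sum>a<N1. Uu(a,j) * UU (a,l)) * QQ (l,c))"
        by (subst sum.swap) (simp add: sum_distrib_right)
      finally show ?thesis unfolding q_def by (simp add: sum_distrib_left mult_ac)
    qed
    then show ?thesis unfolding inspan_def
      by (intro exI[of _ "\<lambda>l. (1 / s j) * (\<Sum>a<N1. Uu(a,j) * UU (a,l))"]) blast
  qed
  obtain E S where S: "S \<subseteq> {..<d}" "orth m E S" "\<forall>l\<in>{..<d}. inspan m E S (q l)"
    using gram_schmidt[of "{..<d}" m q] by blast
  have fS: "finite S" using S(1) finite_subset by blast
  have wE: "inspan m E S (w j)" if "j < r" for j
    using inspan_trans2[OF S(3) wsp[OF that]] .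
  define Et where "Et s = (\<lambda>b. if a0 \<le> b \<and> b < a0 + m then E s (b - a0) else 0)" for s
  have ipEt: "ip N2 (Et s) y = ip m (E s) (\<lambda>c. y (a0 + c))" for s y
    unfolding ip_def by (subst block_sum[OF am]) (auto simp: Et_def)
  have oEt: "orth N2 Et S"
    unfolding orth_def
  proof (intro ballI)
    fix s t assume "s \<in> S" "t \<in> S"
    have "ip N2 (Et s) (Et t) = ip m (E s) (E t)"
      unfolding ipEt by (intro ip_cong) (auto simp: Et_def)
    then show "ip N2 (Et s) (Et t) = (if s = t then 1 else 0)" using S(2) \<open>s \<in> S\<close> \<open>t \<in> S\<close>
      unfolding orth_def by simp
  qed
  have wnorm: "ip m (w j) (w j) = (\<Sum>s\<in>S. (ip N2 (Et s) (v j))^2)" if j: "j < r" for j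
  proof -
    obtain c where c: "\<forall>i<m. w j i = (\<Sum>s\<in>S. c s * E s i)" using wE[OF j] unfolding inspan_def by blast
    have "ip m (w j) (w j) = (\<Sum>s\<in>S. (c s)^2)" by (rule parseval(2)[OF S(2) fS]) (use c in auto)
    also have "\<dots> = (\<Sum>s\<in>S. (ip N2 (Et s) (v j))^2)"
    proof (intro sum.cong refl)
      fix s assume s: "s \<in> S"
      have "ip m (w j) (E s) = c s" by (rule parseval(1)[OF S(2) fS _ s]) (use c in auto)
      moreover have "ip N2 (Et s) (v j) = ip m (E s) (w j)" unfolding ipEt w_def v_def by simp
      ultimately show "(c s)^2 = (ip N2 (Et s) (v j))^2" by (simp add: ip_comm)
    qed
    finally show ?thesis .
  qed
  have "(\<Sum>c<m. \<Sum>j<r. (V(a0 + c, j))^2) = (\<Sum>j<r. ip m (w j) (w j))"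
    unfolding ip_def w_def by (subst sum.swap) (simp add: power2_eq_square)
  also have "\<dots> = (\<Sum>j<r. \<Sum>s\<in>S. (ip N2 (Et s) (v j))^2)" using wnorm by simp
  also have "\<dots> = (\<Sum>s\<in>S. \<Sum>j<r. (ip N2 (Et s) (v j))^2)" by (rule sum.swap)
  also have "\<dots> \<le> (\<Sum>s\<in>S. ip N2 (Et s) (Et s))"
    by (intro sum_mono bessel[OF ov]) simp
  also have "\<dots> = real (card S)" using oEt unfolding orth_def by simp
  also have "\<dots> \<le> real d" using card_mono[OF _ S(1)] by simp
  finally show ?thesis .
qed


lemma offs_Suc: "offs ns (Suc i) = offs ns i + ns i"
  unfolding offs_def by simp

lemma offs_mono: "i \<le> j \<Longrightarrow> offs ns i \<le> offs ns j"
  unfolding offs_def by (rule sum_mono2) auto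

lemma offs_unique:
  assumes i: "c < ns i" and h: "offs ns i' \<le> offs ns i + c" "offs ns i + c < offs ns i' + ns i'"
  shows "i' = i"
proof (rule ccontr)
  assume "i' \<noteq> i"
  then consider "i' < i" | "i < i'" by linarith
  then show False
  proof cases
    case 1
    then have "offs ns (Suc i') \<le> offs ns i" by (intro offs_mono) simp
    then show False using h(2) unfolding offs_Suc by linarith
  next
    case 2
    then have "offs ns (Suc i) \<le> offs ns i'" by (intro offs_mono) simp
    then show False using h(1) i unfolding offs_Suc by linarith
  qed
qed

lemma cluster_val:
  assumes i: "i < n" and c: "c < ns i" and a: "a < N1"
  shows "clusterL N1 n d ns UU QQ (a, offs ns i + c) = (\<Sum>l<d. UU i (a,l) * QQ i (l,c))"
proof -
  let ?b = "offs ns i + c"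
  have "offs ns (Suc i) \<le> offs ns n" using i by (intro offs_mono) simp
  then have bN: "?b < (\<Sum>i<n. ns i)" using c unfolding offs_Suc by (simp add: offs_def)
  have the: "(THE i'. i' < n \<and> offs ns i' \<le> ?b \<and> ?b < offs ns i' + ns i') = i"
    by (rule the_equality) (use i c offs_unique[where ns=ns and i=i and c=c] in auto)
  show ?thesis unfolding clusterL_def using a bN by (simp add: the Let_def)
qed

lemma block_total:
  fixes f :: "nat \<Rightarrow> real"
  shows "(\<Sum>b<offs ns n. f b) = (\<Sum>i<n. \<Sum>c<ns i. f (offs ns i + c))"
proof (induction n)
  case 0 then show ?case by (simp add: offs_def)
next
  case (Suc n)
  show ?case unfolding offs_Suc sum_split_add Suc.IH by simp
qed

lemma det_bound:
  assumes n: "n \<ge> 1" and r: "r = n * d" and d: "d > 0" and ns: "\<forall>i<n. ns i \<ge> 1"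
    and N2: "N2 = (\<Sum>i<n. ns i)"
    and cr: "colrank N1 N2 (clusterL N1 n d ns UU QQ) = r"
  shows "mu_v N1 N2 r (clusterL N1 n d ns UU QQ) \<ge> real N2 / (real n * real (Min (ns ` {..<n})))"
proof -
  define L where "L = clusterL N1 n d ns UU QQ"
  define V where "V = svdV N1 N2 r L"
  have ex: "\<exists>V U s. compact_svd N1 N2 r L U s V"
    using svd_exists[of N1 N2 L r] cr unfolding L_def by blast
  have "\<exists>U s. compact_svd N1 N2 r L U s V"
    unfolding V_def svdV_def by (rule someI_ex[OF ex])
  then obtain Uu s where svd: "compact_svd N1 N2 r L Uu s V" by blast
  define Sb where "Sb b = (\<Sum>j<r. (V(b,j))^2)" for b
  define B where "B i = (\<Sum>c<ns i. Sb (offs ns i + c))" for i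
  have N2o: "N2 = offs ns n" unfolding N2 offs_def ..
  have Bd: "B i \<le> real d" if i: "i < n" for i
  proof -
    have "offs ns (Suc i) \<le> offs ns n" using i by (intro offs_mono) simp
    then have am: "offs ns i + ns i \<le> N2" unfolding offs_Suc N2o .
    have "\<forall>a<N1. \<forall>c<ns i. L(a, offs ns i + c) = (\<Sum>l<d. UU i (a,l) * QQ i (l,c))"
      unfolding L_def using cluster_val[OF i] by blast
    from block_V_bound[OF svd am this] show ?thesis unfolding B_def Sb_def .
  qed
  have Sbnn: "Sb b \<ge> 0" for b unfolding Sb_def by (intro sum_nonneg) auto
  have tot: "(\<Sum>b<N2. Sb b) = real r"
  proof -
    have "(\<Sum>b<N2. Sb b) = (\<Sum>j<r. \<Sum>b<N2. V(b,j) * V(b,j))"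
      unfolding Sb_def by (subst sum.swap) (simp add: power2_eq_square)
    also have "\<dots> = (\<Sum>j<r. 1)" using svd unfolding compact_svd_def by (intro sum.cong) auto
    finally show ?thesis by simp
  qed
  have totB: "(\<Sum>i<n. B i) = real r" using tot unfolding N2o block_total B_def .
  have "0 \<in> {..<n}" using n by simp
  then have "Min (ns ` {..<n}) \<in> ns ` {..<n}" by (intro Min_in) auto
  then obtain i0 where i0: "i0 < n" "ns i0 = Min (ns ` {..<n})" by auto
  have mpos: "ns i0 \<ge> 1" using ns i0 by blast
  have Bi0: "B i0 \<ge> real d"
  proof -
    have "(\<Sum>i<n. B i) = B i0 + (\<Sum>i\<in>{..<n} - {i0}. B i)" using i0 by (simp add: sum.remove)
    also have "(\<Sum>i\<in>{..<n} - {i0}. B i) \<le> real (card ({..<n} - {i0})) * real d"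
      using Bd by (intro sum_bounded_above) auto
    also have "card ({..<n} - {i0}) = n - 1" using i0 by simp
    finally have "real r \<le> B i0 + real (n - 1) * real d" using totB by simp
    moreover have "real r = real n * real d" using r by simp
    moreover have "real (n - 1) = real n - 1" using n by simp
    ultimately show ?thesis by (simp add: algebra_simps)
  qed
  have "\<exists>c<ns i0. Sb (offs ns i0 + c) \<ge> real d / real (ns i0)"
  proof (rule ccontr)
    assume "\<not> (\<exists>c<ns i0. Sb (offs ns i0 + c) \<ge> real d / real (ns i0))"
    then have lt: "\<forall>c<ns i0. Sb (offs ns i0 + c) < real d / real (ns i0)" by (simp add: not_le)
    have "B i0 < real (card {..<ns i0}) * (real d / real (ns i0))"
      unfolding B_def by (rule sum_bounded_above_strict) (use lt mpos in auto)
    then have "B i0 < real d" using mpos by simp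
    then show False using Bi0 by simp
  qed
  then obtain c where c: "c < ns i0" "Sb (offs ns i0 + c) \<ge> real d / real (ns i0)" by blast
  define b0 where "b0 = offs ns i0 + c"
  have b0N: "b0 < N2"
  proof -
    have "offs ns (Suc i0) \<le> offs ns n" using i0 by (intro offs_mono) simp
    then show ?thesis unfolding b0_def N2o offs_Suc using c by simp
  qed
  have N2pos: "N2 > 0" using b0N by simp
  have rpos: "r > 0" using r n d by simp
  define Mset where "Mset = {\<mu>. \<forall>i<N2. (\<Sum>j<r. (V(i,j))^2) \<le> \<mu> * real r / real N2}"
  have muv: "mu_v N1 N2 r L = Inf Mset" unfolding mu_v_def Mset_def V_def ..
  have "real N2 \<in> Mset"
  proof -
    have "Sb i \<le> real r" if "i < N2" for i
    proof -
      have "Sb i \<le> (\<Sum>b<N2. Sb b)" using that Sbnn by (intro member_le_sum) auto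
      then show ?thesis using tot by simp
    qed
    then show ?thesis unfolding Mset_def Sb_def using N2pos by simp
  qed
  then have neM: "Mset \<noteq> {}" by blast
  have lb: "real N2 / (real n * real (Min (ns ` {..<n}))) \<le> \<mu>" if "\<mu> \<in> Mset" for \<mu>
  proof -
    have "Sb b0 \<le> \<mu> * real r / real N2" using that b0N unfolding Mset_def Sb_def by blast
    then have h1: "Sb b0 * real N2 / real r \<le> \<mu>" using N2pos rpos by (simp add: field_simps)
    have "real d / real (ns i0) \<le> Sb b0" using c unfolding b0_def by simp
    then have "real d / real (ns i0) * real N2 / real r \<le> Sb b0 * real N2 / real r"
      using rpos by (intro divide_right_mono mult_right_mono) auto
    moreover have "real d / real (ns i0) * real N2 / real r = real N2 / (real n * real (ns i0))"
      using r d mpos by (simp add: field_simps)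
    ultimately show ?thesis using h1 i0(2) by simp
  qed
  have "real N2 / (real n * real (Min (ns ` {..<n}))) \<le> Inf Mset"
    by (rule cInf_greatest[OF neM lb])
  then show ?thesis using muv unfolding L_def by simp
qed


lemma measure_zero_of_AE:
  assumes "AE x in M. \<not> P x"
  shows "measure M {x \<in> space M. P x} = 0"
proof -
  obtain N where N: "{x \<in> space M. \<not> \<not> P x} \<subseteq> N" "emeasure M N = 0" "N \<in> sets M"
    using AE_E[OF assms] by blast
  show ?thesis
  proof (cases "{x \<in> space M. P x} \<in> sets M")
    case True
    have "N \<in> null_sets M" using N by (simp add: null_sets_def)
    then have "{x \<in> space M. P x} \<in> null_sets M"
      using null_sets_subset True N(1) by auto
    then show ?thesis by (simp add: measure_eq_0_null_sets)
  next
    case False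
    then show ?thesis by (rule measure_notin_sets)
  qed
qed

theorem lemma2:
  fixes M :: "'a measure" and n N1 N2 r :: nat and ns :: "nat \<Rightarrow> nat"
    and U Q :: "nat \<Rightarrow> 'a \<Rightarrow> rmat"
  assumes "prob_space M"
    and "n \<ge> 1" and "n dvd r"
    and "\<forall>i<n. ns i \<ge> 1"
    and "N2 = (\<Sum>i<n. ns i)"
    and "\<forall>i<n. unif_colspace M N1 (r div n) (U i)"
    and "\<forall>i<n. unif_rowspace M (r div n) (ns i) (Q i)"
    and "prob_space.indep_vars M (\<lambda>(i,b). if b then matM N1 (r div n) else matM (r div n) (ns i))
           (\<lambda>(i,b). if b then U i else Q i) ({..<n} \<times> (UNIV :: bool set))"
    and "AE \<omega> in M. colrank N1 N2 (clusterL N1 n (r div n) ns (\<lambda>i. U i \<omega>) (\<lambda>i. Q i \<omega>)) = r"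
    and "real r / real n \<ge> 18 * ln (real (Max (ns ` {..<n})))"
    and "\<forall>i<n. real (ns i) \<ge> 96 * (real r / real n) * ln (real (ns i))"
  shows "measure M {\<omega> \<in> space M.
            mu_v N1 N2 r (clusterL N1 n (r div n) ns (\<lambda>i. U i \<omega>) (\<lambda>i. Q i \<omega>))
              < (1 / real n) * (0.5 * real N2 / real (Min (ns ` {..<n})))}
         \<le> 2 * (\<Sum>i<n. real (ns i) powr (-5))"
proof -
  let ?thr = "(1 / real n) * (0.5 * real N2 / real (Min (ns ` {..<n})))"
  let ?P = "\<lambda>\<omega>. mu_v N1 N2 r (clusterL N1 n (r div n) ns (\<lambda>i. U i \<omega>) (\<lambda>i. Q i \<omega>)) < ?thr"
  have n0: "0 \<in> {..<n}" using assms(2) by simp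
  have ns0: "ns 0 \<ge> 1" using assms(4) n0 by blast
  have rhs_nn: "0 \<le> 2 * (\<Sum>i<n. real (ns i) powr (-5))" by (simp add: sum_nonneg)
  show ?thesis
  proof (cases "r = 0")
    case True
    have fin: "finite (ns ` {..<n})" by simp
    have "ns 0 \<le> Max (ns ` {..<n})" using n0 fin by (intro Max_ge) auto
    then have mx: "real (Max (ns ` {..<n})) \<ge> 1" using ns0 by linarith
    have "ln (real (Max (ns ` {..<n}))) \<le> 0" using assms(10) True by simp
    then have "real (Max (ns ` {..<n})) \<le> 1" using mx by simp
    then have "ns 0 = 1" using \<open>ns 0 \<le> Max (ns ` {..<n})\<close> ns0 by linarith
    then have "real (ns 0) powr (-5) = 1" by simp
    moreover have "real (ns 0) powr (-5) \<le> (\<Sum>i<n. real (ns i) powr (-5))"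
      using n0 by (intro member_le_sum) auto
    ultimately have "2 \<le> 2 * (\<Sum>i<n. real (ns i) powr (-5))" by simp
    moreover have "measure M {\<omega> \<in> space M. ?P \<omega>} \<le> 1"
      using prob_space.prob_le_1[OF assms(1)] by blast
    ultimately show ?thesis by simp
  next
    case False
    define d where "d = r div n"
    have r: "r = n * d" unfolding d_def using assms(3) by simp
    have dpos: "d > 0" using r False by (cases d) auto
    have "Min (ns ` {..<n}) \<in> ns ` {..<n}" using n0 by (intro Min_in) auto
    then have mn: "Min (ns ` {..<n}) \<ge> 1" using assms(4) by auto
    have "ns 0 \<le> N2" unfolding assms(5) using n0 by (intro member_le_sum) auto
    then have N2pos: "N2 > 0" using ns0 by simp
    have thr_lt: "?thr < real N2 / (real n * real (Min (ns ` {..<n})))"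
    proof -
      have pos: "real N2 / (real n * real (Min (ns ` {..<n}))) > 0"
        using N2pos mn assms(2) by simp
      have "?thr = 0.5 * (real N2 / (real n * real (Min (ns ` {..<n}))))" by simp
      then show ?thesis using pos by linarith
    qed
    have "AE \<omega> in M. \<not> ?P \<omega>"
      using assms(9)
    proof (rule eventually_mono)
      fix \<omega> assume cr: "colrank N1 N2 (clusterL N1 n (r div n) ns (\<lambda>i. U i \<omega>) (\<lambda>i. Q i \<omega>)) = r"
      have "mu_v N1 N2 r (clusterL N1 n d ns (\<lambda>i. U i \<omega>) (\<lambda>i. Q i \<omega>))
          \<ge> real N2 / (real n * real (Min (ns ` {..<n})))"
        by (rule det_bound[OF assms(2) r dpos assms(4) assms(5)]) (use cr d_def in simp)
      then show "\<not> ?P \<omega>" using thr_lt unfolding d_def by linarith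
    qed
    then have "measure M {\<omega> \<in> space M. ?P \<omega>} = 0" by (rule measure_zero_of_AE)
    then show ?thesis using rhs_nn by simp
  qed
qed

end
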